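(* Let $X$ be a real random variable with $\mathbb{E}[e^X]=1$ and cumulative distribution function $F$, and assume there exists $\epsilon>0$ with $\mathbb{E}[e^{-\epsilon X}]<\infty$. For $k>0$ let $p(-k)=\int_{-\infty}^{-k}(e^{-k}-e^x)\,dF(x)$ and let $V(-k)$ be the implied volatility at log-strike $-k$, i.e. the unique value with $p_{BS}(-k,V(-k))=p(-k)$. If $k\mapsto-\log p(-k)$ is regularly varying, then as $k\to\infty$ $$\frac{V(-k)^2}{k}\sim\psi\!\left(-1+\frac{-\log p(-k)}{k}\right).$$
   Context: With $\Phi$ the standard normal distribution function and $d_{1,2}(x,\sigma)=-x/\sigma\pm\sigma/2$, $p_{BS}(x,\sigma)=e^x\Phi(-d_2)-\Phi(-d_1)$ is the normalized Black–Scholes put price at log-strike $x$ and total volatility $\sigma$. $\psi:[0,\infty]\to[0,2]$, $\psi[x]=2-4\left(\sqrt{x^2+x}-x\right)$. A measurable function $g$, positive for large $x$, is regularly varying if there is $\alpha\in\mathbb{R}$ with $\lim_{x\to\infty}g(\lambda x)/g(x)=\lambda^\alpha$ for all $\lambda>0$. $g\sim h$ means $g(k)/h(k)\to1$ as $k\to\infty$. *)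

theory Defs
  imports "HOL-Probability.Probability"
begin

definition Phi :: "real \<Rightarrow> real" where
  "Phi x = measure (density lborel std_normal_density) {..x}"

definition d1 :: "real \<Rightarrow> real \<Rightarrow> real" where
  "d1 x \<sigma> = - x / \<sigma> + \<sigma> / 2"

definition d2 :: "real \<Rightarrow> real \<Rightarrow> real" where
  "d2 x \<sigma> = - x / \<sigma> - \<sigma> / 2"

text \<open>Normalized Black--Scholes put price at log-strike x, total volatility sigma.\<close>
definition p_BS :: "real \<Rightarrow> real \<Rightarrow> real" where
  "p_BS x \<sigma> = exp x * Phi (- d2 x \<sigma>) - Phi (- d1 x \<sigma>)"

definition implied_vol :: "real \<Rightarrow> real \<Rightarrow> real" where
  "implied_vol x p = (THE \<sigma>. \<sigma> > 0 \<and> p_BS x \<sigma> = p)"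

definition psi :: "real \<Rightarrow> real" where
  "psi x = 2 - 4 * (sqrt (x\<^sup>2 + x) - x)"

definition regularly_varying :: "(real \<Rightarrow> real) \<Rightarrow> bool" where
  "regularly_varying g \<longleftrightarrow> g \<in> borel_measurable borel \<and>
     (\<forall>\<^sub>F x in at_top. g x > 0) \<and>
     (\<exists>\<alpha>::real. \<forall>c>0. ((\<lambda>x. g (c * x) / g x) \<longlongrightarrow> c powr \<alpha>) at_top)"

end

theory Submission
  imports Defs "HOL-Real_Asymp.Real_Asymp"
begin


abbreviation "SN \<equiv> density lborel std_normal_density"

lemma SN_real_dist: "real_distribution SN"
proof -
  interpret prob_space SN by (rule prob_space_normal_density) simp
  show ?thesis by unfold_locales simp
qed

interpretation SN: real_distribution SN by (rule SN_real_dist)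

lemma Phi_cdf: "Phi = cdf SN"
  by (auto simp: Phi_def cdf_def fun_eq_iff)

lemma SN_singleton: "measure SN {a} = 0"
proof -
  have "emeasure SN {a} = (\<integral>\<^sup>+ x. ennreal (std_normal_density x) * indicator {a} x \<partial>lborel)"
    by (rule emeasure_density) auto
  also have "\<dots> = (\<integral>\<^sup>+ x. ennreal (std_normal_density a) * indicator {a} x \<partial>lborel)"
    by (intro nn_integral_cong) (auto split: split_indicator)
  also have "\<dots> = 0" by simp
  finally show ?thesis by (simp add: measure_def)
qed

lemma Phi_diff:
  assumes "x \<le> y"
  shows "Phi y - Phi x = integral {x..y} std_normal_density"
proof -
  have cont: "continuous_on {x..y} std_normal_density"
    unfolding std_normal_density_def by (intro continuous_intros) auto
  have hi: "(std_normal_density has_integral integral {x..y} std_normal_density) {x..y}"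
    using integrable_continuous_real[OF cont] by (simp add: has_integral_integral)
  have nn: "0 \<le> integral {x..y} std_normal_density"
    by (rule integral_nonneg[OF integrable_continuous_real[OF cont]]) (simp add: normal_density_nonneg)
  have "emeasure SN {x..y} = (\<integral>\<^sup>+ t. ennreal (std_normal_density t) * indicator {x..y} t \<partial>lborel)"
    by (rule emeasure_density) auto
  also have "\<dots> = ennreal (integral {x..y} std_normal_density)"
    by (rule nn_integral_has_integral_lebesgue'[OF _ hi]) (simp add: normal_density_nonneg)
  finally have e: "measure SN {x..y} = integral {x..y} std_normal_density"
    using nn by (simp add: measure_def)
  show ?thesis
  proof (cases "x = y")
    case True then show ?thesis by simp
  next
    case False
    then have "x < y" using assms by simp
    have "{x..y} = {x} \<union> {x<..y}" using \<open>x<y\<close> by auto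
    moreover have "measure SN ({x} \<union> {x<..y}) = measure SN {x} + measure SN {x<..y}"
      by (rule SN.finite_measure_Union) auto
    ultimately have "measure SN {x..y} = measure SN {x} + measure SN {x<..y}" by simp
    then show ?thesis using SN.cdf_diff_eq[OF \<open>x<y\<close>] e SN_singleton
      by (simp add: Phi_cdf)
  qed
qed

lemma DERIV_Phi: "(Phi has_real_derivative std_normal_density x) (at x)"
proof -
  let ?a = "x - 1" and ?b = "x + 1"
  have cont: "continuous_on {?a..?b} std_normal_density"
    unfolding std_normal_density_def by (intro continuous_intros) auto
  have d0: "((\<lambda>u. integral {?a..u} std_normal_density) has_real_derivative std_normal_density x) (at x within {?a..?b})"
    by (rule integral_has_real_derivative[OF cont]) auto
  have d: "((\<lambda>u. Phi ?a + integral {?a..u} std_normal_density) has_real_derivative std_normal_density x) (at x within {?a..?b})"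
    using DERIV_add[OF DERIV_const d0] by simp
  have d2: "((\<lambda>u. Phi ?a + integral {?a..u} std_normal_density) has_real_derivative std_normal_density x) (at x)"
    using d by (subst (asm) at_within_interior) (auto simp: interior_atLeastAtMost_real)
  show ?thesis
  proof (rule has_field_derivative_transform_within_open[OF d2, of "{?a<..<?b}"])
    fix u assume "u \<in> {?a<..<?b}"
    then show "Phi ?a + integral {?a..u} std_normal_density = Phi u"
      using Phi_diff[of ?a u] by simp
  qed auto
qed

lemma Phi_at_top: "(Phi \<longlongrightarrow> 1) at_top"
  unfolding Phi_cdf by (rule SN.cdf_lim_at_top_prob)
lemma Phi_at_bot: "(Phi \<longlongrightarrow> 0) at_bot"
  unfolding Phi_cdf by (rule SN.cdf_lim_at_bot)
lemma Phi_nonneg: "0 \<le> Phi x" unfolding Phi_cdf by (rule SN.cdf_nonneg)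
lemma Phi_le1: "Phi x \<le> 1" unfolding Phi_cdf by (rule SN.cdf_bounded_prob)
lemma isCont_Phi: "isCont Phi x" using DERIV_Phi DERIV_isCont by blast



lemma DERIV_Phi_chain[derivative_intros]:
  "(f has_real_derivative f') (at x within S) \<Longrightarrow>
   ((\<lambda>x. Phi (f x)) has_real_derivative std_normal_density (f x) * f') (at x within S)"
  using DERIV_chain2[OF DERIV_Phi] by blast

lemma snd_pos: "std_normal_density x > 0"
  by (simp add: std_normal_density_def)

lemma snd_even: "std_normal_density (-x) = std_normal_density x"
  by (simp add: std_normal_density_def)

lemma sqrt2pi_aux: "x * sqrt (2 * pi) / (2 * pi) = x / sqrt (2 * pi)"
proof -
  have "sqrt (2 * pi) * sqrt (2 * pi) = 2 * pi" by simp
  then show ?thesis by (metis (no_types, opaque_lifting) divide_divide_eq_right nonzero_mult_div_cancel_right real_sqrt_eq_zero_cancel_iff pi_gt_zero mult_pos_pos zero_less_numeral less_numeral_extra(3))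
qed

lemma DERIV_snd: "(std_normal_density has_real_derivative std_normal_density t * (- t)) (at t)"
proof -
  have "((\<lambda>t. (1 / sqrt (2 * pi)) * exp (- t\<^sup>2 / 2)) has_real_derivative
     (1 / sqrt (2 * pi)) * (exp (- t\<^sup>2 / 2) * (- (2 * t) / 2))) (at t)"
    by (auto intro!: derivative_eq_intros simp: sqrt2pi_aux)
  then show ?thesis unfolding std_normal_density_def by (simp add: algebra_simps)
qed

lemma Phi_mono: "x \<le> y \<Longrightarrow> Phi x \<le> Phi y"
  unfolding Phi_cdf by (rule SN.cdf_nondecreasing)

lemma Phi_strict: "x < y \<Longrightarrow> Phi x < Phi y"
  by (rule DERIV_pos_imp_increasing[of x y Phi]) (auto intro!: exI[of _ "std_normal_density _"] DERIV_Phi snd_pos)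

lemma Phi_m1_pos: "Phi (-1) > 0"
  using Phi_strict[of "-2" "-1"] Phi_nonneg[of "-2"] by simp

lemma Phi_neg_at_top: "((\<lambda>t. Phi (- t)) \<longlongrightarrow> 0) at_top"
  by (rule filterlim_compose[OF Phi_at_bot filterlim_uminus_at_bot_at_top])

lemma Mills:
  assumes "d > 0"
  shows "Phi (- d) \<le> std_normal_density d / d"
proof -
  define h where "h t = std_normal_density t / t - Phi (- t)" for t
  have dh: "(h has_real_derivative - std_normal_density t / t\<^sup>2) (at t)" if "t > 0" for t
  proof -
    have "(h has_real_derivative (std_normal_density t * (- t) * t - std_normal_density t * 1) / (t * t)
             - std_normal_density (-t) * (-1)) (at t)"
      unfolding h_def using that by (auto intro!: derivative_eq_intros DERIV_snd)
    moreover have "(std_normal_density t * (- t) * t - std_normal_density t * 1) / (t * t)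
             - std_normal_density (-t) * (-1) = - std_normal_density t / t\<^sup>2"
      using that by (simp add: snd_even field_simps power2_eq_square)
    ultimately show ?thesis by simp
  qed
  have lim: "(h \<longlongrightarrow> 0) at_top"
  proof -
    have "((\<lambda>t. std_normal_density t / t) \<longlongrightarrow> 0) at_top"
      unfolding std_normal_density_def by real_asymp
    then show ?thesis unfolding h_def using tendsto_diff[OF _ Phi_neg_at_top] by fastforce
  qed
  have "0 < h d"
  proof (rule DERIV_neg_imp_decreasing_at_top[OF _ lim])
    fix x assume "d \<le> x"
    then have "x > 0" using assms by simp
    then show "\<exists>y. DERIV h x :> y \<and> y < 0"
      using dh[of x] snd_pos[of x] by (intro exI[of _ "- std_normal_density x / x\<^sup>2"]) simp
  qed
  then show ?thesis unfolding h_def by simp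
qed



lemma d_key: assumes "s \<noteq> 0"
  shows "exp x * std_normal_density (d2 x s) = std_normal_density (d1 x s)"
proof -
  have "x + - (d2 x s)\<^sup>2 / 2 = - (d1 x s)\<^sup>2 / 2"
    using assms unfolding d1_def d2_def by (simp add: field_simps power2_eq_square)
  then have "exp x * exp (- (d2 x s)\<^sup>2 / 2) = exp (- (d1 x s)\<^sup>2 / 2)"
    by (metis exp_add)
  then show ?thesis unfolding std_normal_density_def by (simp add: algebra_simps)
qed

lemma vega:
  assumes "s > 0"
  shows "((\<lambda>s. p_BS x s) has_real_derivative std_normal_density (d1 x s)) (at s)"
proof -
  have "((\<lambda>s. p_BS x s) has_real_derivative
      exp x * (std_normal_density (- d2 x s) * (- x / s\<^sup>2 + 1/2))
      - std_normal_density (- d1 x s) * (- x / s\<^sup>2 - 1/2)) (at s)"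
  proof -
    have D2: "((\<lambda>s. - d2 x s) has_real_derivative (- x / s\<^sup>2 + 1/2)) (at s)"
      unfolding d2_def using assms
      by (auto intro!: derivative_eq_intros simp: power2_eq_square field_simps)
    have D1: "((\<lambda>s. - d1 x s) has_real_derivative (- x / s\<^sup>2 - 1/2)) (at s)"
      unfolding d1_def using assms
      by (auto intro!: derivative_eq_intros simp: power2_eq_square field_simps)
    show ?thesis unfolding p_BS_def
      by (intro DERIV_diff DERIV_cmult DERIV_Phi_chain D1 D2)
  qed
  moreover have "exp x * (std_normal_density (- d2 x s) * (- x / s\<^sup>2 + 1/2))
      - std_normal_density (- d1 x s) * (- x / s\<^sup>2 - 1/2) = std_normal_density (d1 x s)"
  proof -
    have "exp x * (std_normal_density (- d2 x s) * (- x / s\<^sup>2 + 1/2))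
        = (exp x * std_normal_density (d2 x s)) * (- x / s\<^sup>2 + 1/2)"
      by (simp add: snd_even)
    also have "\<dots> = std_normal_density (d1 x s) * (- x / s\<^sup>2 + 1/2)"
      using d_key[of s x] assms by simp
    finally have e: "exp x * (std_normal_density (- d2 x s) * (- x / s\<^sup>2 + 1/2))
        = std_normal_density (d1 x s) * (- x / s\<^sup>2 + 1/2)" .
    have K: "exp x * std_normal_density (d2 x s) = std_normal_density (d1 x s)"
      using d_key[of s x] assms by simp
    show ?thesis unfolding e snd_even by (simp add: algebra_simps K)
  qed
  ultimately show ?thesis by simp
qed



lemma p_BS_strict:
  assumes "0 < s" "s < t"
  shows "p_BS x s < p_BS x t"
  by (rule DERIV_pos_imp_increasing[OF assms(2)])
     (use assms in \<open>auto intro!: exI vega snd_pos\<close>)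

lemma p_BS_cont: "0 < a \<Longrightarrow> continuous_on {a..b} (p_BS x)"
proof (rule DERIV_atLeastAtMost_imp_continuous_on)
  fix s assume "0 < a" "a \<le> s"
  then show "\<exists>y. DERIV (p_BS x) s :> y" using vega[of s x] by auto
qed

lemma d_at_top:
  fixes k c :: real
  assumes "k > 0"
  shows "filterlim (\<lambda>s. k/s + c * s) at_top (at_right 0)"
proof -
  have "filterlim (\<lambda>s. k * inverse s) at_top (at_right 0)"
    by (rule filterlim_tendsto_pos_mult_at_top[where f="\<lambda>_. k" and c=k and g=inverse])
       (auto intro: assms filterlim_inverse_at_top_right)
  then have "filterlim (\<lambda>s. c * s + k * inverse s) at_top (at_right (0::real))"
    by (rule filterlim_tendsto_add_at_top[rotated]) (auto intro!: tendsto_eq_intros)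
  then show ?thesis by (simp add: field_simps add.commute)
qed

lemma p_BS_lim0:
  assumes "k > 0"
  shows "((\<lambda>s. p_BS (-k) s) \<longlongrightarrow> 0) (at_right 0)"
proof -
  have a: "((\<lambda>s. Phi (- (k/s + (-1/2) * s))) \<longlongrightarrow> 0) (at_right 0)"
    by (rule filterlim_compose[OF Phi_neg_at_top d_at_top[OF assms]])
  have b: "((\<lambda>s. Phi (- (k/s + (1/2) * s))) \<longlongrightarrow> 0) (at_right 0)"
    by (rule filterlim_compose[OF Phi_neg_at_top d_at_top[OF assms]])
  have "((\<lambda>s. exp (-k) * Phi (- (k/s + (-1/2) * s)) - Phi (- (k/s + (1/2) * s))) \<longlongrightarrow> exp (-k) * 0 - 0) (at_right 0)"
    by (intro tendsto_intros a b)
  then show ?thesis unfolding p_BS_def d1_def d2_def by simp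
qed

lemma p_BS_nonneg:
  assumes "k > 0" "s > 0"
  shows "0 \<le> p_BS (-k) s"
proof -
  have "\<forall>\<^sub>F t in at_right 0. p_BS (-k) t \<le> p_BS (-k) s"
    using eventually_at_right_real[OF assms(2)]
    by eventually_elim (auto intro: less_imp_le p_BS_strict)
  then show ?thesis
    using tendsto_upperbound[OF p_BS_lim0[OF assms(1)]] by simp
qed

lemma snd_antimono: "0 \<le> a \<Longrightarrow> a \<le> b \<Longrightarrow> std_normal_density b \<le> std_normal_density a"
  unfolding std_normal_density_def by (intro mult_left_mono) (auto simp: power_mono)

lemma p_BS_upper:
  assumes "k > 0" "s > 0" "d2 (-k) s \<ge> 1"
  shows "p_BS (-k) s \<le> exp (- (d1 (-k) s)\<^sup>2 / 2)"
proof -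
  let ?a = "d2 (-k) s" and ?b = "d1 (-k) s"
  have "p_BS (-k) s \<le> exp (-k) * Phi (- ?a)"
    unfolding p_BS_def using Phi_nonneg by simp
  also have "\<dots> \<le> exp (-k) * (std_normal_density ?a / ?a)"
    using Mills[of ?a] assms by (intro mult_left_mono) auto
  also have "\<dots> \<le> exp (-k) * std_normal_density ?a"
    using assms snd_pos[of ?a] by (simp add: divide_le_eq)
  also have "\<dots> = std_normal_density ?b"
    using d_key[of s "-k"] assms by simp
  also have "\<dots> \<le> exp (- ?b\<^sup>2 / 2)"
  proof -
    have "1 \<le> sqrt (2 * pi)" using pi_gt3 by (simp add: real_le_rsqrt)
    then show ?thesis unfolding std_normal_density_def
      by (simp add: divide_le_eq mult_le_cancel_right1)
  qed
  finally show ?thesis .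
qed

lemma p_BS_lower:
  assumes "k > 0" "s > 0"
  shows "p_BS (-k) s \<ge> s / (d1 (-k) s + 1) * std_normal_density (d1 (-k) s + 1)"
proof -
  define d where "d = d1 (-k) s"
  have dpos: "d > 0" unfolding d_def d1_def using assms by (intro add_pos_pos divide_pos_pos) auto
  define s' where "s' = s * d / (d + 1)"
  have s'pos: "0 < s'" "s' < s" unfolding s'_def using dpos assms by (auto simp: field_simps)
  have "\<And>x. s' \<le> x \<Longrightarrow> x \<le> s \<Longrightarrow> (p_BS (-k) has_real_derivative std_normal_density (d1 (-k) x)) (at x)"
    using s'pos by (intro vega) auto
  from MVT2[OF s'pos(2) this]
  obtain z where z: "s' < z" "z < s" "p_BS (-k) s - p_BS (-k) s' = (s - s') * std_normal_density (d1 (-k) z)"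
    by blast
  have "d1 (-k) z \<le> d + 1"
  proof -
    have "k / z \<le> k / s'" using z s'pos assms by (intro divide_left_mono) auto
    also have "k / s' = (k / s) * ((d+1)/d)" unfolding s'_def using dpos assms by (simp add: field_simps)
    finally have 1: "k/z \<le> (k / s) * ((d+1)/d)" .
    have e2: "(s/2) * ((d+1)/d) = s/2 + s/(2*d)" using dpos by (simp add: field_simps)
    have "s/(2*d) > 0" using dpos assms by simp
    then have 2: "z / 2 \<le> (s/2) * ((d+1)/d)" unfolding e2 using z by simp
    have e3: "(k/s + s/2) * ((d+1)/d) = (k/s) * ((d+1)/d) + (s/2) * ((d+1)/d)" by (rule distrib_right)
    have e4: "d1 (-k) z = k/z + z/2" by (simp add: d1_def)
    have "d1 (-k) z \<le> (k/s + s/2) * ((d+1)/d)" unfolding e3 e4 using 1 2 by linarith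
    also have "\<dots> = d + 1"
    proof -
      have "k/s + s/2 = d" by (simp add: d_def d1_def)
      then show ?thesis using dpos by simp
    qed
    finally show ?thesis .
  qed
  moreover have "d1 (-k) z \<ge> 0" unfolding d1_def using z s'pos assms by simp
  ultimately have "std_normal_density (d + 1) \<le> std_normal_density (d1 (-k) z)"
    by (rule snd_antimono[rotated])
  moreover have "s - s' = s / (d + 1)" unfolding s'_def using dpos by (simp add: field_simps)
  moreover have "0 \<le> p_BS (-k) s'" using p_BS_nonneg assms s'pos by simp
  ultimately show ?thesis using z(3) assms dpos unfolding d_def[symmetric]
    by (smt (verit) divide_pos_pos mult_left_mono)
qed



lemma s1_facts:
  assumes "k > 0"
  defines "s1 \<equiv> sqrt (1 + 2*k) - 1"
  shows "s1 > 0" "d2 (-k) s1 = 1" "d1 (-k) s1 = sqrt (1 + 2*k)"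
proof -
  have r: "sqrt (1 + 2*k) > 1" using assms by (simp add: real_less_rsqrt)
  then show "s1 > 0" unfolding s1_def by simp
  have sq: "(s1 + 1)^2 = 1 + 2*k" unfolding s1_def using assms by simp
  then have e: "2*k = s1^2 + 2 * s1" by (simp add: power2_eq_square algebra_simps)
  have "d2 (-k) s1 = (2*k - s1^2) / (2 * s1)" unfolding d2_def using \<open>s1 > 0\<close>
    by (simp add: field_simps power2_eq_square)
  also have "\<dots> = 1" unfolding e using \<open>s1 > 0\<close> by simp
  finally show d2: "d2 (-k) s1 = 1" .
  have "d1 (-k) s1 = d2 (-k) s1 + s1" unfolding d1_def d2_def by simp
  then show "d1 (-k) s1 = sqrt (1 + 2*k)" using d2 unfolding s1_def by simp
qed

lemma p_BS_s1:
  assumes "k > 0"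
  shows "p_BS (-k) (sqrt (1 + 2*k) - 1) \<ge> exp (-k) * (Phi (-1) - 1 / sqrt (1 + 2*k))"
proof -
  let ?s = "sqrt (1 + 2*k) - 1" and ?r = "sqrt (1 + 2*k)"
  note f = s1_facts[OF assms]
  have rpos: "?r > 0" using assms by simp
  have "Phi (- ?r) \<le> std_normal_density ?r / ?r" using Mills[OF rpos] .
  also have "std_normal_density ?r = exp (-k) * std_normal_density 1"
    using d_key[of ?s "-k"] f by simp
  also have "\<dots> \<le> exp (-k)"
  proof -
    have "1 \<le> sqrt (2 * pi)" using pi_gt3 by (simp add: real_le_rsqrt)
    moreover have "exp (- (1::real)\<^sup>2 / 2) \<le> 1" by simp
    ultimately have "std_normal_density 1 \<le> 1" unfolding std_normal_density_def
      by (intro mult_le_one) auto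
    then show ?thesis by (simp add: mult_left_le)
  qed
  finally have "Phi (- ?r) \<le> exp (-k) / ?r" using rpos by (simp add: divide_right_mono)
  moreover have "p_BS (-k) ?s = exp (-k) * Phi (-1) - Phi (- ?r)"
    unfolding p_BS_def using f by simp
  ultimately show ?thesis by (simp add: algebra_simps)
qed

lemma d2_decr:
  assumes "k > 0" "0 < s" "s < t"
  shows "d2 (-k) t < d2 (-k) s"
proof -
  have "k / t < k / s" using assms by (simp add: divide_strict_left_mono)
  then show ?thesis unfolding d2_def using assms by simp
qed

lemma implied:
  assumes "k > 0" "0 < q" "q < exp (-k) * (Phi (-1) - 1 / sqrt (1 + 2*k))"
  shows "0 < implied_vol (-k) q \<and> implied_vol (-k) q < sqrt (1 + 2*k) - 1
         \<and> p_BS (-k) (implied_vol (-k) q) = q"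
proof -
  define s1 where "s1 = sqrt (1 + 2*k) - 1"
  have s1pos: "s1 > 0" unfolding s1_def using s1_facts(1)[OF assms(1)] .
  have ps1: "q < p_BS (-k) s1" unfolding s1_def using p_BS_s1[OF assms(1)] assms(3) by simp
  have "\<forall>\<^sub>F s in at_right 0. p_BS (-k) s < q \<and> s \<in> {0<..<s1}"
    using order_tendstoD(2)[OF p_BS_lim0[OF assms(1)] assms(2)] eventually_at_right_real[OF s1pos]
    by (rule eventually_conj)
  then obtain s0 where s0: "p_BS (-k) s0 < q" "0 < s0" "s0 < s1"
    using eventually_happens'[OF trivial_limit_at_right_real] by fastforce
  obtain \<sigma> where sig: "s0 \<le> \<sigma>" "\<sigma> \<le> s1" "p_BS (-k) \<sigma> = q"
    using IVT'[of "p_BS (-k)" s0 q s1] s0 ps1 p_BS_cont[of s0 s1 "-k"] by auto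
  have sig2: "\<sigma> < s1" using sig ps1 by (cases "\<sigma> = s1") auto
  have unique: "\<tau> = \<sigma>" if "\<tau> > 0" "p_BS (-k) \<tau> = q" for \<tau>
  proof (rule ccontr)
    assume "\<tau> \<noteq> \<sigma>"
    then consider "\<tau> < \<sigma>" | "\<sigma> < \<tau>" by linarith
    then show False
      using p_BS_strict[of \<tau> \<sigma> "-k"] p_BS_strict[of \<sigma> \<tau> "-k"] that sig s0 by cases auto
  qed
  have "implied_vol (-k) q = \<sigma>"
    unfolding implied_vol_def
    by (rule the_equality) (use sig s0 unique in auto)
  then show ?thesis using sig sig2 s0 unfolding s1_def by auto
qed



lemma psi_ident:
  fixes k L :: real
  assumes "k > 0" "L \<ge> k"
  shows "psi (-1 + L/k) * (sqrt (2*L) + sqrt (2*L - 2*k))\<^sup>2 = 4*k"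
proof -
  define W where "W = sqrt (L * (L - k))"
  have W2: "W\<^sup>2 = L * (L - k)" unfolding W_def using assms by simp
  have Wn: "W \<ge> 0" unfolding W_def using assms by simp
  have x: "(-1 + L/k)\<^sup>2 + (-1 + L/k) = (L * (L - k)) / k\<^sup>2"
    using assms by (simp add: field_simps power2_eq_square)
  have sx: "sqrt ((-1 + L/k)\<^sup>2 + (-1 + L/k)) = W / k"
    unfolding x W_def using assms by (simp add: real_sqrt_divide)
  have ab: "sqrt (2*L) * sqrt (2*L - 2*k) = 2 * W"
  proof -
    have "sqrt (2*L) * sqrt (2*L - 2*k) = sqrt (4 * (L * (L - k)))"
      by (simp add: real_sqrt_mult[symmetric] algebra_simps)
    also have "\<dots> = 2 * W" unfolding W_def by (simp add: real_sqrt_mult)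
    finally show ?thesis .
  qed
  have N2: "(sqrt (2*L) + sqrt (2*L - 2*k))\<^sup>2 = 4*L - 2*k + 4*W"
    using assms by (simp add: power2_sum ab)
  have "psi (-1 + L/k) = (4*L - 2*k - 4*W) / k"
    unfolding psi_def sx using assms by (simp add: field_simps)
  then have "psi (-1 + L/k) * (sqrt (2*L) + sqrt (2*L - 2*k))\<^sup>2
        = ((4*L - 2*k)\<^sup>2 - 16 * W\<^sup>2) / k"
    unfolding N2 by (simp add: power2_eq_square algebra_simps)
  also have "\<dots> = 4 * k" unfolding W2 using assms by (simp add: power2_eq_square field_simps)
  finally show ?thesis .
qed

lemma diff_le_sq: fixes u v :: real
  assumes "0 \<le> v" "v \<le> u" "0 < u"
  shows "u - v \<le> (u\<^sup>2 - v\<^sup>2) / u"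
proof -
  have "(u - v) * u \<le> u\<^sup>2 - v\<^sup>2"
    using assms mult_left_mono[of v u v] by (simp add: power2_eq_square algebra_simps)
  then show ?thesis using assms by (simp add: le_divide_eq)
qed

definition bnd :: "real \<Rightarrow> real \<Rightarrow> real \<Rightarrow> real" where
  "bnd e c L = (6 * sqrt (2 * L) + 5) * (1 + e) / (e * L - c)"

lemma core:
  fixes k q e C :: real
  assumes k1: "k \<ge> 1" and q0: "0 < q" and e0: "e > 0"
    and qC: "q \<le> exp (- (1 + e) * k) * C"
    and small: "C * exp (- e * k) + 1 / sqrt (1 + 2*k) < Phi (-1)"
    and Lbig: "e * (- ln q) - ln C > 0"
  shows "\<exists>t. 0 \<le> t \<and> t \<le> bnd e (ln C) (- ln q) \<and>
     (implied_vol (-k) q)\<^sup>2 / k / psi (-1 + (- ln q) / k) = 1 / (1 - t)\<^sup>2"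
proof -
  define L where "L = - ln q"
  have k0: "k > 0" using k1 by simp
  have C0: "C > 0"
  proof (rule ccontr)
    assume "\<not> C > 0"
    then have "exp (- (1 + e) * k) * C \<le> 0" by (simp add: mult_nonneg_nonpos)
    then show False using q0 qC by simp
  qed
  have "q < exp (-k) * (Phi (-1) - 1 / sqrt (1 + 2*k))"
  proof -
    have "exp (- (1 + e) * k) * C = exp (-k) * (C * exp (- e * k))"
      by (simp add: algebra_simps exp_add[symmetric])
    also have "\<dots> < exp (-k) * (Phi (-1) - 1 / sqrt (1 + 2*k))"
      using small by simp
    finally show ?thesis using qC by simp
  qed
  note I = implied[OF k0 q0 this]
  define \<sigma> where "\<sigma> = implied_vol (-k) q"
  have s0: "0 < \<sigma>" and s1: "\<sigma> < sqrt (1 + 2*k) - 1" and pq: "p_BS (-k) \<sigma> = q"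
    using I unfolding \<sigma>_def by auto
  define a1 where "a1 = d1 (-k) \<sigma>"
  define a2 where "a2 = d2 (-k) \<sigma>"
  have a2gt: "a2 > 1"
    using d2_decr[OF k0 s0 s1] s1_facts[OF k0] unfolding a2_def by simp
  have a1pos: "a1 > 0" unfolding a1_def d1_def using k0 s0 by (intro add_pos_pos divide_pos_pos) auto
  have a12: "a1\<^sup>2 - a2\<^sup>2 = 2 * k" unfolding a1_def a2_def d1_def d2_def using s0
    by (simp add: power2_eq_square field_simps)
  have a1a2: "a1 + a2 = 2 * k / \<sigma>" unfolding a1_def a2_def d1_def d2_def by simp
  have "q \<le> exp (- a1\<^sup>2 / 2)" using p_BS_upper[OF k0 s0] a2gt pq unfolding a1_def a2_def by simp
  then have "ln q \<le> ln (exp (- a1\<^sup>2 / 2))" using q0 by (subst ln_le_cancel_iff) auto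
  then have up: "a1\<^sup>2 / 2 \<le> L" unfolding L_def by simp
  have lo: "\<sigma> / (a1 + 1) * std_normal_density (a1 + 1) \<le> q"
    using p_BS_lower[OF k0 s0] pq unfolding a1_def by simp
  have "ln (\<sigma> / (a1 + 1) * std_normal_density (a1 + 1)) =
      ln \<sigma> - ln (a1 + 1) - ln (sqrt (2 * pi)) - (a1 + 1)\<^sup>2 / 2"
    unfolding std_normal_density_def using s0 a1pos
    by (simp add: ln_mult ln_div)
  moreover have "ln (\<sigma> / (a1 + 1) * std_normal_density (a1 + 1)) \<le> ln q"
    using lo q0 s0 a1pos snd_pos by (subst ln_le_cancel_iff) auto
  ultimately have lo2: "L \<le> (a1 + 1)\<^sup>2 / 2 + ln (a1 + 1) - ln \<sigma> + ln (sqrt (2 * pi))"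
    unfolding L_def by simp
  have "1 / \<sigma> \<le> a1 + 1"
  proof -
    have "1 / \<sigma> \<le> k / \<sigma>" using k1 s0 by (simp add: divide_right_mono)
    also have "\<dots> \<le> a1 + 1" unfolding a1_def d1_def using s0 by simp
    finally show ?thesis .
  qed
  then have "ln (1 / \<sigma>) \<le> ln (a1 + 1)" using s0 a1pos by (subst ln_le_cancel_iff) auto
  then have "- ln \<sigma> \<le> ln (a1 + 1)" using s0 by (simp add: ln_div)
  moreover have "ln (a1 + 1) \<le> a1" using ln_add_one_self_le_self[of a1] a1pos by (simp add: add.commute)
  moreover have "ln (sqrt (2 * pi)) \<le> 2"
  proof -
    have "sqrt (2 * pi) \<le> 3" using pi_less_4 by (simp add: real_sqrt_le_iff real_le_lsqrt)
    also have "3 \<le> exp (2::real)" using exp_ge_add_one_self[of 2] by simp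
    finally have "ln (sqrt (2 * pi)) \<le> ln (exp 2)" by (subst ln_le_cancel_iff) auto
    then show ?thesis by simp
  qed
  moreover have "(a1 + 1)\<^sup>2 = a1\<^sup>2 + 2 * a1 + 1" by (simp add: power2_eq_square algebra_simps)
  ultimately have lo3: "2 * L \<le> a1\<^sup>2 + 6 * a1 + 5" using lo2 by linarith
  have "ln q \<le> - (1 + e) * k + ln C"
  proof -
    have "ln q \<le> ln (exp (- (1 + e) * k) * C)" using qC q0 by simp
    also have "\<dots> = - (1 + e) * k + ln C" using C0 by (simp add: ln_mult)
    finally show ?thesis .
  qed
  moreover have "- (1 + e) * k = - ((1 + e) * k)" by (simp only: mult_minus_left)
  ultimately have Lk: "(1 + e) * k \<le> L + ln C" unfolding L_def by linarith
  have B2: "2 * L - 2 * k \<ge> 2 * (e * L - ln C) / (1 + e)"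
  proof -
    have "k \<le> (L + ln C) / (1 + e)" using Lk e0 by (simp add: field_simps)
    then have "2 * L - 2 * k \<ge> 2 * L - 2 * ((L + ln C) / (1 + e))" by linarith
    also have "2 * L - 2 * ((L + ln C) / (1 + e)) = 2 * (e * L - ln C) / (1 + e)"
      using e0 by (simp add: field_simps)
    finally show ?thesis by simp
  qed
  have eL: "e * L - ln C > 0" using Lbig unfolding L_def .
  have "2 * (e * L - ln C) / (1 + e) > 0" using eL e0 by simp
  then have B2pos: "2 * L - 2 * k > 0" using B2 by linarith
  define A where "A = sqrt (2 * L)"
  define B where "B = sqrt (2 * L - 2 * k)"
  have A2: "A\<^sup>2 = 2 * L" and B2': "B\<^sup>2 = 2 * L - 2 * k" unfolding A_def B_def using B2pos k0 by auto
  have Bpos: "B > 0" unfolding B_def using B2pos by simp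
  have BA: "B \<le> A" unfolding A_def B_def using k0 by simp
  have a1A: "a1 \<le> A" unfolding A_def using up a1pos by (simp add: real_le_rsqrt)
  have a2B: "a2 \<le> B" unfolding B_def using up a12 a2gt by (simp add: real_le_rsqrt)
  define N where "N = A + B"
  define D where "D = a1 + a2"
  have Npos: "N > 0" unfolding N_def using Bpos BA by simp
  have Dpos: "D > 0" unfolding D_def using a1pos a2gt by simp
  have DN: "D \<le> N" unfolding D_def N_def using a1A a2B by simp
  define t where "t = (N - D) / N"
  have t0: "0 \<le> t" unfolding t_def using DN Npos by simp
  have Delta: "A\<^sup>2 - a1\<^sup>2 \<le> 6 * A + 5" using lo3 A2 a1A by simp
  have "N - D \<le> (A\<^sup>2 - a1\<^sup>2) / A + (A\<^sup>2 - a1\<^sup>2) / B"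
  proof -
    have "A - a1 \<le> (A\<^sup>2 - a1\<^sup>2) / A" using diff_le_sq[of a1 A] a1pos a1A Bpos BA by simp
    moreover have "B - a2 \<le> (B\<^sup>2 - a2\<^sup>2) / B" using diff_le_sq[of a2 B] a2gt a2B Bpos by simp
    moreover have "B\<^sup>2 - a2\<^sup>2 = A\<^sup>2 - a1\<^sup>2" using A2 B2' a12 by simp
    ultimately show ?thesis unfolding N_def D_def by simp
  qed
  also have "\<dots> \<le> (6 * A + 5) / A + (6 * A + 5) / B"
    using Delta Bpos BA by (intro add_mono divide_right_mono) auto
  finally have ND: "N - D \<le> (6 * A + 5) / A + (6 * A + 5) / B" .
  have "t \<le> ((6 * A + 5) / A + (6 * A + 5) / B) / N"
    unfolding t_def using ND Npos by (simp add: divide_right_mono)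
  also have "\<dots> = (6 * A + 5) / (A * N) + (6 * A + 5) / (B * N)"
    by (simp add: add_divide_distrib)
  also have "\<dots> \<le> (6 * A + 5) / B\<^sup>2 + (6 * A + 5) / B\<^sup>2"
  proof (intro add_mono divide_left_mono)
    show "B\<^sup>2 \<le> A * N" unfolding N_def using Bpos BA
      by (simp add: power2_eq_square algebra_simps mult_mono add_increasing)
    show "B\<^sup>2 \<le> B * N" unfolding N_def using Bpos BA by (simp add: power2_eq_square algebra_simps)
  qed (use Bpos BA Npos in auto)
  also have "\<dots> = (6 * A + 5) * 2 / (2 * L - 2 * k)" using B2' by simp
  also have "\<dots> \<le> (6 * A + 5) * 2 / (2 * (e * L - ln C) / (1 + e))"
  proof (rule divide_left_mono)
    show "2 * (e * L - ln C) / (1 + e) \<le> 2 * L - 2 * k" by (rule B2)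
    have "L \<ge> 0" using up zero_le_power2[of a1] by linarith
    then show "0 \<le> (6 * A + 5) * 2" unfolding A_def by simp
    have "2 * (e * L - ln C) / (1 + e) > 0" using eL e0 by simp
    then show "0 < (2 * L - 2 * k) * (2 * (e * L - ln C) / (1 + e))" using B2pos by (rule mult_pos_pos[rotated])
  qed
  also have "\<dots> = bnd e (ln C) L" unfolding bnd_def A_def using e0 eL by (simp add: field_simps)
  finally have tb: "t \<le> bnd e (ln C) L" .
  have psi_eq: "psi (-1 + L/k) = 4 * k / N\<^sup>2"
    using psi_ident[of k L] k0 B2pos Npos unfolding N_def A_def B_def by (simp add: field_simps)
  have "\<sigma>\<^sup>2 / k / psi (-1 + L/k) = N\<^sup>2 / D\<^sup>2"
    unfolding psi_eq D_def a1a2 using k0 s0 Npos by (simp add: field_simps power2_eq_square)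
  also have "\<dots> = 1 / (1 - t)\<^sup>2" unfolding t_def using Npos Dpos by (simp add: field_simps power2_eq_square)
  finally show ?thesis using t0 tb unfolding \<sigma>_def L_def by blast
qed



lemma bnd_lim: fixes e c :: real assumes "e > 0"
  shows "((\<lambda>L. bnd e c L) \<longlongrightarrow> 0) at_top"
  unfolding bnd_def using assms by real_asymp

lemma small_lim: fixes e c :: real assumes "e > 0"
  shows "((\<lambda>k. c * exp (- e * k) + 1 / sqrt (1 + 2 * k)) \<longlongrightarrow> 0) at_top"
  using assms by real_asymp

lemma pointwise_bound:
  fixes x k e :: real assumes "e > 0"
  shows "indicator {..-k} x * (exp (-k) - exp x) \<le> exp (- (1 + e) * k) * exp (- e * x)"
proof (cases "x \<le> -k")
  case True
  have "indicator {..-k} x * (exp (-k) - exp x) \<le> exp (-k)" using True by simp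
  also have "exp (-k) \<le> exp (- (1 + e) * k + - e * x)"
    using True assms mult_left_mono[of x "-k" e] by (simp add: algebra_simps)
  also have "\<dots> = exp (- (1 + e) * k) * exp (- e * x)" by (rule exp_add)
  finally show ?thesis .
next
  case False
  then show ?thesis by simp
qed

theorem lemma6:
  fixes M :: "'a measure" and X :: "'a \<Rightarrow> real" and \<epsilon> :: real
    and p :: "real \<Rightarrow> real"
  assumes "prob_space M"
    and "X \<in> borel_measurable M"
    and "integrable M (\<lambda>\<omega>. exp (X \<omega>))"
    and "prob_space.expectation M (\<lambda>\<omega>. exp (X \<omega>)) = 1"
    and "\<epsilon> > 0"
    and "integrable M (\<lambda>\<omega>. exp (- \<epsilon> * X \<omega>))"
    and p_def: "\<And>k. p k = prob_space.expectation M
                 (\<lambda>\<omega>. indicator {..k} (X \<omega>) * (exp k - exp (X \<omega>)))"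
    and "regularly_varying (\<lambda>k. - ln (p (- k)))"
  shows "((\<lambda>k. (implied_vol (- k) (p (- k)))\<^sup>2 / k
              / psi (-1 + (- ln (p (- k))) / k)) \<longlongrightarrow> 1) at_top"
proof -
  interpret P: prob_space M by fact
  note Xm[measurable] = assms(2)
  have e0: "\<epsilon> > 0" by fact
  define C where "C = P.expectation (\<lambda>\<omega>. exp (- \<epsilon> * X \<omega>))"
  define L where "L k = - ln (p (- k))" for k
  have p_eq: "p (-k) = P.expectation (\<lambda>\<omega>. indicator {..-k} (X \<omega>) * (exp (-k) - exp (X \<omega>)))" for k
    using p_def[of "-k"] by simp
  have int_ind: "integrable M (\<lambda>\<omega>. indicator {..-k} (X \<omega>) * (exp (-k) - exp (X \<omega>)))" for k :: real
  proof (rule P.integrable_const_bound[where B="exp (-k)"])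
    show "AE \<omega> in M. norm (indicator {..-k} (X \<omega>) * (exp (-k) - exp (X \<omega>))) \<le> exp (-k)"
      by (auto split: split_indicator)
    show "(\<lambda>\<omega>. indicator {..-k} (X \<omega>) * (exp (-k) - exp (X \<omega>))) \<in> borel_measurable M"
      by measurable
  qed
  have p_nonneg: "0 \<le> p (-k)" for k
    unfolding p_eq by (rule integral_nonneg_AE) (auto split: split_indicator)
  have p_upper: "p (-k) \<le> exp (- (1 + \<epsilon>) * k) * C" for k
  proof -
    have "p (-k) \<le> P.expectation (\<lambda>\<omega>. exp (- (1 + \<epsilon>) * k) * exp (- \<epsilon> * X \<omega>))"
      unfolding p_eq
    proof (rule integral_mono[OF int_ind])
      show "integrable M (\<lambda>\<omega>. exp (- (1 + \<epsilon>) * k) * exp (- \<epsilon> * X \<omega>))"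
        using assms(6) by simp
      fix \<omega> show "indicator {..-k} (X \<omega>) * (exp (-k) - exp (X \<omega>)) \<le> exp (- (1 + \<epsilon>) * k) * exp (- \<epsilon> * X \<omega>)"
        by (rule pointwise_bound[OF e0])
    qed
    also have "\<dots> = exp (- (1 + \<epsilon>) * k) * C" unfolding C_def by simp
    finally show ?thesis .
  qed
  have ev_L: "\<forall>\<^sub>F k in at_top. L k > 0"
    using assms(8) unfolding regularly_varying_def L_def by blast
  have ev_p: "\<forall>\<^sub>F k in at_top. p (-k) > 0"
    using ev_L
  proof eventually_elim
    case (elim k)
    then have "p (-k) \<noteq> 0" unfolding L_def by auto
    then show ?case using p_nonneg[of k] by simp
  qed
  have ev_Llow: "\<forall>\<^sub>F k in at_top. (1 + \<epsilon>) * k - ln C \<le> L k"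
    using ev_p
  proof eventually_elim
    case (elim k)
    have C0: "C > 0"
    proof (rule ccontr)
      assume "\<not> C > 0"
      then have "exp (- (1 + \<epsilon>) * k) * C \<le> 0" by (simp add: mult_nonneg_nonpos)
      then show False using elim p_upper[of k] by simp
    qed
    have "ln (p (-k)) \<le> ln (exp (- (1 + \<epsilon>) * k) * C)" using elim p_upper[of k] by simp
    also have "\<dots> = - (1 + \<epsilon>) * k + ln C" using C0 by (simp add: ln_mult)
    finally have "ln (p (-k)) \<le> - (1 + \<epsilon>) * k + ln C" .
    moreover have "- (1 + \<epsilon>) * k = - ((1 + \<epsilon>) * k)" by (simp only: mult_minus_left)
    ultimately show ?case unfolding L_def by linarith
  qed
  have "filterlim (\<lambda>k. (1 + \<epsilon>) * k - ln C) at_top at_top"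
    using e0 by real_asymp
  then have Ltop: "filterlim L at_top at_top"
    by (rule filterlim_at_top_mono) (rule ev_Llow)
  have ev_big: "\<forall>\<^sub>F k in at_top. (ln C + 1) / \<epsilon> < L k"
    using Ltop by (simp add: filterlim_at_top_dense)
  have ev_small: "\<forall>\<^sub>F k in at_top. C * exp (- \<epsilon> * k) + 1 / sqrt (1 + 2 * k) < Phi (-1)"
    by (rule order_tendstoD(2)[OF small_lim[OF e0] Phi_m1_pos])
  have ev_core: "\<forall>\<^sub>F k in at_top. \<exists>t. 0 \<le> t \<and> t \<le> bnd \<epsilon> (ln C) (L k) \<and>
      (implied_vol (-k) (p (-k)))\<^sup>2 / k / psi (-1 + (- ln (p (-k))) / k) = 1 / (1 - t)\<^sup>2"
    using eventually_ge_at_top[of 1] ev_p ev_big ev_small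
  proof eventually_elim
    case (elim k)
    have "\<epsilon> * (- ln (p (-k))) - ln C > 0"
    proof -
      have "ln C + 1 < \<epsilon> * L k" using elim(3) e0 by (simp add: divide_less_eq mult.commute)
      then show ?thesis unfolding L_def by simp
    qed
    from core[OF elim(1) elim(2) e0 p_upper[of k] elim(4) this]
    show ?case unfolding L_def by simp
  qed
  define T where "T k = (SOME t. 0 \<le> t \<and> t \<le> bnd \<epsilon> (ln C) (L k) \<and>
      (implied_vol (-k) (p (-k)))\<^sup>2 / k / psi (-1 + (- ln (p (-k))) / k) = 1 / (1 - t)\<^sup>2)" for k
  have ev_T: "\<forall>\<^sub>F k in at_top. 0 \<le> T k \<and> T k \<le> bnd \<epsilon> (ln C) (L k) \<and>
      (implied_vol (-k) (p (-k)))\<^sup>2 / k / psi (-1 + (- ln (p (-k))) / k) = 1 / (1 - T k)\<^sup>2"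
    using ev_core
  proof eventually_elim
    case (elim k)
    then show ?case unfolding T_def by (rule someI_ex)
  qed
  have bl: "((\<lambda>k. bnd \<epsilon> (ln C) (L k)) \<longlongrightarrow> 0) at_top"
    by (rule filterlim_compose[OF bnd_lim[OF e0] Ltop])
  have "(T \<longlongrightarrow> 0) at_top"
  proof (rule tendsto_sandwich[OF _ _ tendsto_const bl])
    show "\<forall>\<^sub>F k in at_top. 0 \<le> T k" using ev_T by eventually_elim simp
    show "\<forall>\<^sub>F k in at_top. T k \<le> bnd \<epsilon> (ln C) (L k)" using ev_T by eventually_elim simp
  qed
  then have "((\<lambda>k. 1 / (1 - T k)\<^sup>2) \<longlongrightarrow> 1 / (1 - 0)\<^sup>2) at_top"
    by (intro tendsto_intros) auto
  then have "((\<lambda>k. 1 / (1 - T k)\<^sup>2) \<longlongrightarrow> 1) at_top" by simp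
  moreover have "\<forall>\<^sub>F k in at_top. 1 / (1 - T k)\<^sup>2 =
      (implied_vol (-k) (p (-k)))\<^sup>2 / k / psi (-1 + (- ln (p (-k))) / k)"
    using ev_T by eventually_elim simp
  ultimately show ?thesis by (rule Lim_transform_eventually)
qed

end
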